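(* Consider the finite game with players $\mathcal{M}=\{1,\dots,M\}$, common action set $\mathcal{N}$ and costs $c_i(\mathbf{a}) = \frac{\sigma^2}{h_{ia_i}}\,\frac{\beta_i}{[1-\sum_{l\in\mathcal{M}_{a_i}(\mathbf{a})}\beta_l]^+}$, and suppose $h_{ij}=h$ for all $i\in\mathcal{M}$, $j\in\mathcal{N}$ (for a constant $h>0$) and $\beta_i=\beta$ for all $i\in\mathcal{M}$ (single class traffic). Then every Nash equilibrium of this game is system optimal, i.e., minimizes $C(\mathbf{a})=\sum_{i=1}^M c_i(\mathbf{a})$ over all $\mathbf{a}\in\mathcal{N}^M$.
   Context: Uplink cellular model: mobiles $\mathcal{M}=\{1,\dots,M\}$, BSs $\mathcal{N}=\{1,\dots,N\}$, power gains $h_{ij}>0$, noise power $\sigma^2>0$, target SINRs $\gamma_i>0$, $\beta_i=\gamma_i/(1+\gamma_i)$. Association profile $\mathbf{a}\in\mathcal{N}^M$, $\mathcal{M}_j(\mathbf{a})=\{l: a_l=j\}$, $[x]^+=\max(x,0)$, positive$/0=+\infty$; $(b,\mathbf{a}_{-i})$ replaces $a_i$ by $b$. $\mathbf{a}$ is a Nash equilibrium if $a_i\in\arg\min_{b\in\mathcal{N}}c_i(b,\mathbf{a}_{-i})$ for all $i$. Standing assumption: there exists at least one feasible association, i.e. some $\mathbf{a}$ with $\sum_{l\in\mathcal{M}_j(\mathbf{a})}\beta_l<1$ for all $j$. *)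

theory Defs
  imports "HOL-Analysis.Analysis" "HOL-Library.Extended_Real"
begin

(* Mobiles are 1..M, base stations 1..N. An association profile is a function
   a :: nat => nat; only its values on {1..M} matter. *)

definition beta_of :: "real \<Rightarrow> real" where
  "beta_of g = g / (1 + g)"

definition profiles :: "nat \<Rightarrow> nat \<Rightarrow> (nat \<Rightarrow> nat) set" where
  "profiles M N = {a. \<forall>i\<in>{1..M}. a i \<in> {1..N}}"

definition cell :: "nat \<Rightarrow> (nat \<Rightarrow> nat) \<Rightarrow> nat \<Rightarrow> nat set" where
  "cell M a j = {l \<in> {1..M}. a l = j}"

definition load :: "nat \<Rightarrow> (nat \<Rightarrow> real) \<Rightarrow> (nat \<Rightarrow> nat) \<Rightarrow> nat \<Rightarrow> real" where
  "load M beta a j = (\<Sum>l\<in>cell M a j. beta l)"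

definition feasible :: "nat \<Rightarrow> nat \<Rightarrow> (nat \<Rightarrow> real) \<Rightarrow> (nat \<Rightarrow> nat) \<Rightarrow> bool" where
  "feasible M N beta a \<longleftrightarrow> a \<in> profiles M N \<and> (\<forall>j\<in>{1..N}. load M beta a j < 1)"

definition cost :: "nat \<Rightarrow> real \<Rightarrow> (nat \<Rightarrow> nat \<Rightarrow> real) \<Rightarrow> (nat \<Rightarrow> real)
                     \<Rightarrow> (nat \<Rightarrow> nat) \<Rightarrow> nat \<Rightarrow> ereal" where
  "cost M sigma2 h beta a i =
     (let d = max (1 - load M beta a (a i)) 0 in
      if d = 0 then \<infinity> else ereal (sigma2 / h i (a i) * beta i / d))"

definition total_cost :: "nat \<Rightarrow> real \<Rightarrow> (nat \<Rightarrow> nat \<Rightarrow> real) \<Rightarrow> (nat \<Rightarrow> real)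
                     \<Rightarrow> (nat \<Rightarrow> nat) \<Rightarrow> ereal" where
  "total_cost M sigma2 h beta a = (\<Sum>i\<in>{1..M}. cost M sigma2 h beta a i)"

definition nash_eq :: "nat \<Rightarrow> nat \<Rightarrow> real \<Rightarrow> (nat \<Rightarrow> nat \<Rightarrow> real) \<Rightarrow> (nat \<Rightarrow> real)
                     \<Rightarrow> (nat \<Rightarrow> nat) \<Rightarrow> bool" where
  "nash_eq M N sigma2 h beta a \<longleftrightarrow> a \<in> profiles M N \<and>
     (\<forall>i\<in>{1..M}. \<forall>b\<in>{1..N}. cost M sigma2 h beta a i \<le> cost M sigma2 h beta (a(i := b)) i)"

definition system_optimal :: "nat \<Rightarrow> nat \<Rightarrow> real \<Rightarrow> (nat \<Rightarrow> nat \<Rightarrow> real) \<Rightarrow> (nat \<Rightarrow> real)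
                     \<Rightarrow> (nat \<Rightarrow> nat) \<Rightarrow> bool" where
  "system_optimal M N sigma2 h beta a \<longleftrightarrow> a \<in> profiles M N \<and>
     (\<forall>a'\<in>profiles M N. total_cost M sigma2 h beta a \<le> total_cost M sigma2 h beta a')"

end

theory Submission
  imports Defs
begin

definition FF :: "real \<Rightarrow> real \<Rightarrow> nat \<Rightarrow> real" where
  "FF K b n = real n * K * b / (1 - real n * b)"

lemma incr_real:
  fixes K b x y :: real
  assumes K: "K > 0" and b: "b > 0" and xy: "x \<le> y" and y: "(y+1)*b < 1" and x0: "0 \<le> x"
  shows "(x+1)*K*b/(1-(x+1)*b) - x*K*b/(1-x*b) \<le> (y+1)*K*b/(1-(y+1)*b) - y*K*b/(1-y*b)"
proof -
  define u where "u = 1 - x*b"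
  define w where "w = 1 - y*b"
  have vb: "w > b" using y unfolding w_def by (simp add: algebra_simps)
  have uv: "u \<ge> w" using xy b unfolding u_def w_def by (simp add: mult_right_mono)
  have ub: "u > b" using uv vb by simp
  have e1: "(x+1)*K*b/(1-(x+1)*b) - x*K*b/(1-x*b) = K*b/(u*(u-b))"
    using ub b unfolding u_def by (simp add: field_simps; simp add: algebra_simps)
  have e2: "(y+1)*K*b/(1-(y+1)*b) - y*K*b/(1-y*b) = K*b/(w*(w-b))"
    using vb b unfolding w_def by (simp add: field_simps; simp add: algebra_simps)
  have "w*(w-b) \<le> u*(u-b)" using uv vb b by (intro mult_mono) auto
  moreover have "0 < w*(w-b)" using vb b by simp
  ultimately have "K*b/(u*(u-b)) \<le> K*b/(w*(w-b))"
    using K b by (intro divide_left_mono) auto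
  thus ?thesis using e1 e2 by simp
qed

lemma FF_incr:
  assumes K: "K > 0" and b: "b > 0" and xy: "x + 1 \<le> y" and y: "real y * b < 1"
  shows "FF K b (x+1) - FF K b x \<le> FF K b y - FF K b (y-1)"
proof -
  have ry: "real y = real (y-1) + 1" using xy by simp
  have le: "real x \<le> real (y-1)" using xy by simp
  have y': "(real (y-1) + 1) * b < 1" using y unfolding ry[symmetric] .
  have x0: "0 \<le> real x" by simp
  have H: "(real x+1)*K*b/(1-(real x+1)*b) - real x*K*b/(1-real x*b)
     \<le> (real (y-1)+1)*K*b/(1-(real (y-1)+1)*b) - real (y-1)*K*b/(1-real (y-1)*b)"
    by (rule incr_real[OF K b le y' x0])
  have ex1: "real x + 1 = real (x+1)" by simp
  show ?thesis using H unfolding ry[symmetric] ex1 FF_def by simp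
qed

lemma sum_two:
  assumes "finite I" "k \<in> I" "l \<in> I" "k \<noteq> l"
  shows "sum f I = f k + f l + sum f (I - {k, l})"
proof -
  have "sum f I = f k + sum f (I - {k})" using assms by (simp add: sum.remove)
  moreover have "sum f (I - {k}) = f l + sum f (I - {k} - {l})"
    using assms by (intro sum.remove) auto
  moreover have "I - {k} - {l} = I - {k, l}" by auto
  ultimately show ?thesis by (simp add: add.assoc)
qed

lemma exchange:
  assumes fin: "finite I" and K: "K > 0" and b: "b > 0"
    and bal: "\<forall>j\<in>I. \<forall>k\<in>I. n j \<le> n k + 1"
  shows "\<forall>m. (\<Sum>j\<in>I. m j - n j) = e \<longrightarrow> (\<Sum>j\<in>I. m j) = (\<Sum>j\<in>I. n j) \<longrightarrow>
           (\<forall>j\<in>I. real (m j) * b < 1) \<longrightarrow> (\<Sum>j\<in>I. FF K b (n j)) \<le> (\<Sum>j\<in>I. FF K b (m j))"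
proof (induct e rule: less_induct)
  case (less e)
  show ?case
  proof (intro allI impI)
    fix m :: "'a \<Rightarrow> nat"
    assume ex: "(\<Sum>j\<in>I. m j - n j) = e" and sm: "(\<Sum>j\<in>I. m j) = (\<Sum>j\<in>I. n j)"
      and fm: "\<forall>j\<in>I. real (m j) * b < 1"
    show "(\<Sum>j\<in>I. FF K b (n j)) \<le> (\<Sum>j\<in>I. FF K b (m j))"
    proof (cases "\<forall>j\<in>I. m j = n j")
      case True
      then show ?thesis by (simp cong: sum.cong)
    next
      case False
      then obtain j0 where j0: "j0 \<in> I" "m j0 \<noteq> n j0" by auto
      obtain k where k: "k \<in> I" "m k > n k"
      proof (rule ccontr)
        assume "\<not> thesis"
        hence le: "\<forall>j\<in>I. m j \<le> n j" using that by force
        hence "m j0 < n j0" using j0 by force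
        hence "(\<Sum>j\<in>I. m j) < (\<Sum>j\<in>I. n j)" using le j0 fin
          by (intro sum_strict_mono_ex1) auto
        thus False using sm by simp
      qed
      obtain l where l: "l \<in> I" "m l < n l"
      proof (rule ccontr)
        assume "\<not> thesis"
        hence le: "\<forall>j\<in>I. n j \<le> m j" using that by force
        hence "n j0 < m j0" using j0 by force
        hence "(\<Sum>j\<in>I. n j) < (\<Sum>j\<in>I. m j)" using le j0 fin
          by (intro sum_strict_mono_ex1) auto
        thus False using sm by simp
      qed
      have kl: "k \<noteq> l" using k l by auto
      have lk: "m l + 1 \<le> m k" using bal k l by force
      define m' where "m' = m(k := m k - 1, l := m l + 1)"
      have m'k: "m' k = m k - 1" and m'l: "m' l = m l + 1" using kl unfolding m'_def by auto
      have m'o: "\<And>j. j \<in> I - {k, l} \<Longrightarrow> m' j = m j" unfolding m'_def by auto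
      have fm': "\<forall>j\<in>I. real (m' j) * b < 1"
      proof
        fix j assume j: "j \<in> I"
        have "m' j \<le> m j \<or> m' j \<le> m k"
          using m'k m'l m'o[of j] lk j by (cases "j = k"; cases "j = l") auto
        hence "real (m' j) * b \<le> real (m j) * b \<or> real (m' j) * b \<le> real (m k) * b"
          using b by (auto intro: mult_right_mono)
        thus "real (m' j) * b < 1" using fm j k by force
      qed
      have sm': "(\<Sum>j\<in>I. m' j) = (\<Sum>j\<in>I. n j)"
      proof -
        have "(\<Sum>j\<in>I. m' j) = m' k + m' l + (\<Sum>j\<in>I - {k,l}. m' j)"
          using sum_two[OF fin k(1) l(1) kl] .
        also have "\<dots> = m' k + m' l + (\<Sum>j\<in>I - {k,l}. m j)" by (simp add: m'o)
        also have "\<dots> = m k + m l + (\<Sum>j\<in>I - {k,l}. m j)" using m'k m'l k by simp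
        also have "\<dots> = (\<Sum>j\<in>I. m j)" using sum_two[OF fin k(1) l(1) kl, of m] by simp
        finally show ?thesis using sm by simp
      qed
      have lt: "(\<Sum>j\<in>I. m' j - n j) < e"
        unfolding ex[symmetric]
      proof (rule sum_strict_mono_ex1[OF fin])
        show "\<forall>j\<in>I. m' j - n j \<le> m j - n j"
        proof
          fix j assume "j \<in> I"
          thus "m' j - n j \<le> m j - n j" using m'k m'l m'o[of j] l
            by (cases "j = k"; cases "j = l") auto
        qed
        show "\<exists>j\<in>I. m' j - n j < m j - n j" using k m'k by (intro bexI[of _ k]) auto
      qed
      have IH: "(\<Sum>j\<in>I. FF K b (n j)) \<le> (\<Sum>j\<in>I. FF K b (m' j))"
        using less(1)[OF lt] sm' fm' by blast
      have inc: "FF K b (m l + 1) - FF K b (m l) \<le> FF K b (m k) - FF K b (m k - 1)"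
        using FF_incr[OF K b lk] fm k by auto
      have "(\<Sum>j\<in>I. FF K b (m' j)) = FF K b (m' k) + FF K b (m' l) + (\<Sum>j\<in>I - {k,l}. FF K b (m' j))"
        using sum_two[OF fin k(1) l(1) kl] .
      also have "\<dots> = FF K b (m k - 1) + FF K b (m l + 1) + (\<Sum>j\<in>I - {k,l}. FF K b (m j))"
        using m'k m'l by (simp add: m'o)
      also have "\<dots> \<le> FF K b (m k) + FF K b (m l) + (\<Sum>j\<in>I - {k,l}. FF K b (m j))"
        using inc by simp
      also have "\<dots> = (\<Sum>j\<in>I. FF K b (m j))" using sum_two[OF fin k(1) l(1) kl, of "\<lambda>j. FF K b (m j)"] by simp
      finally show ?thesis using IH by simp
    qed
  qed
qed


lemma card_cell_sum:
  assumes "a \<in> profiles M N"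
  shows "(\<Sum>j\<in>{1..N}. card (cell M a j)) = M"
proof -
  have "(\<Sum>j\<in>{1..N}. card (cell M a j)) = (\<Sum>j\<in>{1..N}. \<Sum>i\<in>{x. x\<in>{1..M} \<and> a x = j}. (1::nat))"
    unfolding cell_def by simp
  also have "\<dots> = (\<Sum>i\<in>{1..M}. (1::nat))"
    using assms by (intro sum.group) (auto simp: profiles_def)
  finally show ?thesis by simp
qed

lemma cell_update:
  assumes "i \<in> {1..M}" "b \<noteq> a i"
  shows "card (cell M (a(i := b)) b) = card (cell M a b) + 1"
proof -
  have "cell M (a(i := b)) b = insert i (cell M a b)" using assms unfolding cell_def by auto
  moreover have "i \<notin> cell M a b" using assms unfolding cell_def by auto
  moreover have "finite (cell M a b)" unfolding cell_def by simp
  ultimately show ?thesis by simp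
qed

theorem proposition6:
  fixes M N :: nat and sigma2 hc g :: real
    and h :: "nat \<Rightarrow> nat \<Rightarrow> real" and gamma :: "nat \<Rightarrow> real" and a :: "nat \<Rightarrow> nat"
  assumes sigma_pos: "sigma2 > 0"
    and h_pos: "hc > 0"
    and h_const: "\<forall>i\<in>{1..M}. \<forall>j\<in>{1..N}. h i j = hc"
    and g_pos: "g > 0"
    and gamma_const: "\<forall>i\<in>{1..M}. gamma i = g"
    and feas: "\<exists>a0. feasible M N (\<lambda>i. beta_of (gamma i)) a0"
    and ne: "nash_eq M N sigma2 h (\<lambda>i. beta_of (gamma i)) a"
  shows "system_optimal M N sigma2 h (\<lambda>i. beta_of (gamma i)) a"
proof -
  define bt where "bt = beta_of g"
  define K where "K = sigma2 / hc"
  have b0: "0 < bt" "bt < 1" unfolding bt_def beta_of_def using g_pos by (auto simp: field_simps)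
  have K0: "K > 0" unfolding K_def using sigma_pos h_pos by simp
  have load_eq: "load M (\<lambda>i. beta_of (gamma i)) a' j = real (card (cell M a' j)) * bt" for a' j
  proof -
    have "(\<Sum>l\<in>cell M a' j. beta_of (gamma l)) = (\<Sum>l\<in>cell M a' j. bt)"
      by (rule sum.cong) (auto simp: cell_def gamma_const bt_def)
    thus ?thesis unfolding load_def by simp
  qed
  define Cf where "Cf n = (if 1 \<le> real n * bt then \<infinity> else ereal (K*bt/(1 - real n*bt)))" for n :: nat
  have cost_eq: "cost M sigma2 h (\<lambda>i. beta_of (gamma i)) a' i = Cf (card (cell M a' (a' i)))"
    if "i \<in> {1..M}" "a' i \<in> {1..N}" for a' i
  proof -
    have hi: "h i (a' i) = hc" using h_const that by blast
    have gi: "beta_of (gamma i) = bt" using gamma_const that bt_def by simp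
    show ?thesis unfolding cost_def Let_def load_eq hi gi Cf_def K_def
      by (auto simp: max_def)
  qed
  define G where "G n = (if n = 0 then 0 else if 1 \<le> real n * bt then \<infinity> else ereal (FF K bt n))" for n :: nat
  have Gf: "G k = ereal (FF K bt k)" if "real k * bt < 1" for k
    using that by (simp add: G_def FF_def)
  have sumC: "(\<Sum>i\<in>S. Cf (card S)) = G (card S)" if fS: "finite S" for S :: "nat set"
  proof (cases "S = {}")
    case True thus ?thesis by (simp add: G_def)
  next
    case False
    hence c0: "card S \<noteq> 0" using fS by simp
    show ?thesis
    proof (cases "1 \<le> real (card S) * bt")
      case True
      hence "(\<Sum>i\<in>S. Cf (card S)) = \<infinity>" using fS False by (auto simp: sum_Pinfty Cf_def)
      thus ?thesis using True c0 by (simp add: G_def)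
    next
      case nT: False
      have "(\<Sum>i\<in>S. Cf (card S)) = (\<Sum>i\<in>S. ereal (K*bt/(1 - real (card S)*bt)))"
        using nT by (simp add: Cf_def)
      also have "\<dots> = ereal (real (card S) * (K*bt/(1 - real (card S)*bt)))"
        by simp
      also have "\<dots> = G (card S)" using nT c0 by (simp add: G_def FF_def)
      finally show ?thesis .
    qed
  qed
  have total_eq: "total_cost M sigma2 h (\<lambda>i. beta_of (gamma i)) a' = (\<Sum>j\<in>{1..N}. G (card (cell M a' j)))"
    if pa: "a' \<in> profiles M N" for a'
  proof -
    have "total_cost M sigma2 h (\<lambda>i. beta_of (gamma i)) a' = (\<Sum>i\<in>{1..M}. Cf (card (cell M a' (a' i))))"
      unfolding total_cost_def using pa by (intro sum.cong refl cost_eq) (auto simp: profiles_def)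
    also have "\<dots> = (\<Sum>j\<in>{1..N}. \<Sum>i\<in>{x. x\<in>{1..M} \<and> a' x = j}. Cf (card (cell M a' (a' i))))"
      using pa by (intro sum.group[symmetric]) (auto simp: profiles_def)
    also have "\<dots> = (\<Sum>j\<in>{1..N}. \<Sum>i\<in>cell M a' j. Cf (card (cell M a' j)))"
      by (intro sum.cong refl) (auto simp: cell_def)
    also have "\<dots> = (\<Sum>j\<in>{1..N}. G (card (cell M a' j)))"
      by (intro sum.cong refl sumC) (simp add: cell_def)
    finally show ?thesis .
  qed
  define n where "n j = card (cell M a j)" for j
  have pa: "a \<in> profiles M N" using ne unfolding nash_eq_def by simp
  have dev: "Cf (n (a i)) \<le> Cf (n bb + 1)" if i: "i \<in> {1..M}" and bb: "bb \<in> {1..N}" and ne': "bb \<noteq> a i" for i bb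
  proof -
    have ai: "a i \<in> {1..N}" using pa i unfolding profiles_def by blast
    have "cost M sigma2 h (\<lambda>i. beta_of (gamma i)) a i \<le> cost M sigma2 h (\<lambda>i. beta_of (gamma i)) (a(i := bb)) i"
      using ne i bb unfolding nash_eq_def by blast
    moreover have "cost M sigma2 h (\<lambda>i. beta_of (gamma i)) a i = Cf (n (a i))"
      using cost_eq[of i a, OF i ai] unfolding n_def .
    moreover have "cost M sigma2 h (\<lambda>i. beta_of (gamma i)) (a(i := bb)) i = Cf (n bb + 1)"
      using cost_eq[of i "a(i := bb)"] i bb cell_update[of i M bb a, OF i ne'] unfolding n_def by simp
    ultimately show ?thesis by simp
  qed
  have feasA: "\<forall>j\<in>{1..N}. real (n j) * bt < 1"
  proof (rule ccontr)
    assume "\<not> ?thesis"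
    then obtain j where j: "j \<in> {1..N}" "1 \<le> real (n j) * bt" by force
    have "n j \<noteq> 0" using j(2) by (metis mult_zero_left not_one_le_zero of_nat_0)
    hence "cell M a j \<noteq> {}" unfolding n_def by auto
    then obtain i where i: "i \<in> cell M a j" by blast
    have iM: "i \<in> {1..M}" and aij: "a i = j" using i unfolding cell_def by auto
    have big: "1 \<le> real (n bb + 1) * bt" if "bb \<in> {1..N}" "bb \<noteq> j" for bb
    proof -
      have "Cf (n j) \<le> Cf (n bb + 1)" using dev[OF iM that(1)] that aij by simp
      moreover have "Cf (n j) = \<infinity>" using j by (simp add: Cf_def)
      ultimately have "Cf (n bb + 1) = \<infinity>" by simp
      thus ?thesis by (auto simp: Cf_def split: if_splits)
    qed
    obtain a0 where a0: "feasible M N (\<lambda>i. beta_of (gamma i)) a0" using feas by blast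
    define m where "m j = card (cell M a0 j)" for j
    have pa0: "a0 \<in> profiles M N" using a0 unfolding feasible_def by simp
    have fm: "real (m jj) * bt < 1" if "jj \<in> {1..N}" for jj
      using a0 that unfolding feasible_def load_eq m_def by blast
    have le: "\<forall>jj\<in>{1..N}. m jj \<le> n jj"
    proof
      fix jj assume jj: "jj \<in> {1..N}"
      show "m jj \<le> n jj"
      proof (cases "jj = j")
        case True
        have "real (m jj) * bt < real (n jj) * bt" using fm[OF jj] j True by simp
        hence "real (m jj) < real (n jj)" using b0 by (simp add: mult_less_cancel_right_pos)
        thus ?thesis by simp
      next
        case False
        have "real (m jj) * bt < real (n jj + 1) * bt" using fm[OF jj] big[OF jj False] by simp
        hence "real (m jj) < real (n jj + 1)" using b0 by (simp add: mult_less_cancel_right_pos)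
        thus ?thesis by simp
      qed
    qed
    have lt: "m j < n j"
    proof -
      have "real (m j) * bt < real (n j) * bt" using fm[OF j(1)] j by simp
      hence "real (m j) < real (n j)" using b0 by (simp add: mult_less_cancel_right_pos)
      thus ?thesis by simp
    qed
    have "(\<Sum>jj\<in>{1..N}. m jj) < (\<Sum>jj\<in>{1..N}. n jj)"
      using le lt j(1) by (intro sum_strict_mono_ex1) auto
    moreover have "(\<Sum>jj\<in>{1..N}. m jj) = M" using card_cell_sum[OF pa0] unfolding m_def .
    moreover have "(\<Sum>jj\<in>{1..N}. n jj) = M" using card_cell_sum[OF pa] unfolding n_def .
    ultimately show False by simp
  qed
  have bal: "\<forall>j\<in>{1..N}. \<forall>k\<in>{1..N}. n j \<le> n k + 1"
  proof (intro ballI)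
    fix j k assume j: "j \<in> {1..N}" and k: "k \<in> {1..N}"
    show "n j \<le> n k + 1"
    proof (rule ccontr)
      assume c: "\<not> n j \<le> n k + 1"
      hence jk: "j \<noteq> k" by auto
      have "n j \<noteq> 0" using c by auto
      hence "cell M a j \<noteq> {}" unfolding n_def by auto
      then obtain i where i: "i \<in> cell M a j" by blast
      have iM: "i \<in> {1..M}" and aij: "a i = j" using i unfolding cell_def by auto
      have d: "Cf (n j) \<le> Cf (n k + 1)" using dev[OF iM k] jk aij by simp
      have fj: "real (n j) * bt < 1" using feasA j by blast
      have lt: "real (n k + 1) * bt < real (n j) * bt" using c b0 by (intro mult_strict_right_mono) auto
      hence fk: "real (n k + 1) * bt < 1" using fj by simp
      have "K*bt/(1 - real (n j)*bt) \<le> K*bt/(1 - real (n k + 1)*bt)"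
        using d fj fk unfolding Cf_def by simp
      moreover have "K*bt/(1 - real (n k + 1)*bt) < K*bt/(1 - real (n j)*bt)"
        using lt fj fk K0 b0 by (intro divide_strict_left_mono) auto
      ultimately show False by simp
    qed
  qed
  show ?thesis unfolding system_optimal_def
  proof (intro conjI ballI)
    show "a \<in> profiles M N" by (rule pa)
    fix a' assume pa': "a' \<in> profiles M N"
    define m where "m j = card (cell M a' j)" for j
    have ta: "total_cost M sigma2 h (\<lambda>i. beta_of (gamma i)) a = ereal (\<Sum>j\<in>{1..N}. FF K bt (n j))"
    proof -
      have "(\<Sum>j\<in>{1..N}. G (n j)) = (\<Sum>j\<in>{1..N}. ereal (FF K bt (n j)))"
        using feasA by (intro sum.cong refl Gf) auto
      thus ?thesis using total_eq[OF pa] unfolding n_def by simp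
    qed
    show "total_cost M sigma2 h (\<lambda>i. beta_of (gamma i)) a \<le> total_cost M sigma2 h (\<lambda>i. beta_of (gamma i)) a'"
    proof (cases "\<exists>j\<in>{1..N}. 1 \<le> real (m j) * bt")
      case True
      then obtain j where j: "j \<in> {1..N}" "1 \<le> real (m j) * bt" by blast
      have "m j \<noteq> 0" using j(2) by (metis mult_zero_left not_one_le_zero of_nat_0)
      hence "G (m j) = \<infinity>" using j by (simp add: G_def)
      hence "(\<Sum>j\<in>{1..N}. G (m j)) = \<infinity>" using j by (auto simp: sum_Pinfty)
      hence "total_cost M sigma2 h (\<lambda>i. beta_of (gamma i)) a' = \<infinity>"
        using total_eq[OF pa'] unfolding m_def by simp
      thus ?thesis by simp
    next
      case False
      have tb: "total_cost M sigma2 h (\<lambda>i. beta_of (gamma i)) a' = ereal (\<Sum>j\<in>{1..N}. FF K bt (m j))"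
      proof -
        have "(\<Sum>j\<in>{1..N}. G (m j)) = (\<Sum>j\<in>{1..N}. ereal (FF K bt (m j)))"
          using False by (intro sum.cong refl Gf) (auto simp: not_le)
        thus ?thesis using total_eq[OF pa'] unfolding m_def by simp
      qed
      have sm: "(\<Sum>j\<in>{1..N}. m j) = (\<Sum>j\<in>{1..N}. n j)"
        using card_cell_sum[OF pa'] card_cell_sum[OF pa] unfolding m_def n_def by simp
      have fm: "\<forall>j\<in>{1..N}. real (m j) * bt < 1" using False by (auto simp: not_le)
      have "(\<Sum>j\<in>{1..N}. FF K bt (n j)) \<le> (\<Sum>j\<in>{1..N}. FF K bt (m j))"
        using exchange[OF _ K0 b0(1) bal, of "\<Sum>j\<in>{1..N}. m j - n j"] sm fm by simp
      thus ?thesis using ta tb by simp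
    qed
  qed
qed

end
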